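(* Let $\Gamma$ be an $(l,2)$-hyperflower on $N$ vertices, with eigenvalues $\lambda_1\le\cdots\le\lambda_N$ of its (signless) normalized Laplacian. Then the spectrum of $\Gamma$ is given by: $0$, with multiplicity $N-l-1$; $1$, with multiplicity at least $l-1$; $\lambda_N>1$; and $\lambda_{N-1}=N-\lambda_N-l+1\geq 1$. In the particular case in which $\#h$ is the same for all $h\in\mathcal{H}$, $\lambda_N=\frac{N-l}{2}+1$ and $\lambda_{N-1}=\frac{N-l}{2}$.
   Context: A hypergraph $\Gamma=(\mathcal{V},\mathcal{H})$ has a finite vertex set $\mathcal{V}=\{v_1,\ldots,v_N\}$ and a set $\mathcal{H}$ of nonempty subsets of $\mathcal{V}$ (hyperedges); standing assumption: no isolated vertices. $\deg(v)$ is the number of hyperedges containing $v$, $D$ the diagonal degree matrix, $A$ the matrix with $A_{ii}=0$ and $A_{ij}=-\#\{h\in\mathcal{H}: v_i,v_j\in h\}$ for $i\ne j$, and the (signless) normalized Laplacian is $L=\mathrm{Id}-D^{-1}A$, whose eigenvalues are real and denoted $\lambda_1\le\cdots\le\lambda_N$; $\#h$ is the cardinality of $h$. An $(l,r)$-hyperflower is a hypergraph whose vertex set is $\mathcal{V}=U\sqcup\mathcal{W}$ with $U=\{v_1,\ldots,v_l\}$ (peripheral vertices) and such that there are $r$ pairwise disjoint nonempty sets $h_1,\ldots,h_r\subseteq\mathcal{W}$ with $\mathcal{H}=\{h_i\cup\{v_j\}: i=1,\ldots,r,\ j=1,\ldots,l\}$ (by the no-isolated-vertex assumption, $\mathcal{W}=h_1\cup\cdots\cup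 h_r$). *)

theory Defs
  imports "Jordan_Normal_Form.Char_Poly"
begin

text \<open>Hypergraphs with vertex set V = {0..<N} (vertices v_1..v_N indexed by 0..N-1)
and a set H of hyperedges.\<close>

definition hypergraph :: "nat \<Rightarrow> nat set set \<Rightarrow> bool" where
  "hypergraph N H \<longleftrightarrow> (\<forall>h\<in>H. h \<noteq> {} \<and> h \<subseteq> {..<N}) \<and>
     (\<forall>v<N. \<exists>h\<in>H. v \<in> h)"

definition hdeg :: "nat set set \<Rightarrow> nat \<Rightarrow> nat" where
  "hdeg H v = card {h\<in>H. v \<in> h}"

definition degree_mat :: "nat \<Rightarrow> nat set set \<Rightarrow> real mat" where
  "degree_mat N H = mat N N (\<lambda>(i,j). if i = j then real (hdeg H i) else 0)"

definition degree_mat_inv :: "nat \<Rightarrow> nat set set \<Rightarrow> real mat" where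
  "degree_mat_inv N H = mat N N (\<lambda>(i,j). if i = j then 1 / real (hdeg H i) else 0)"

definition adj_mat :: "nat \<Rightarrow> nat set set \<Rightarrow> real mat" where
  "adj_mat N H = mat N N (\<lambda>(i,j). if i = j then 0
      else - real (card {h\<in>H. i \<in> h \<and> j \<in> h}))"

definition norm_laplacian :: "nat \<Rightarrow> nat set set \<Rightarrow> real mat" where
  "norm_laplacian N H = 1\<^sub>m N - degree_mat_inv N H * adj_mat N H"

definition is_sorted_spectrum :: "nat \<Rightarrow> nat set set \<Rightarrow> real list \<Rightarrow> bool" where
  "is_sorted_spectrum N H ls \<longleftrightarrow> length ls = N \<and> sorted ls \<and>
     char_poly (norm_laplacian N H) = (\<Prod>i<N. [:- (ls ! i), 1:])"

definition hyperflower :: "nat \<Rightarrow> nat \<Rightarrow> nat \<Rightarrow> nat set set \<Rightarrow> bool" where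
  "hyperflower l r N H \<longleftrightarrow> (\<exists>U hs.
     U \<subseteq> {..<N} \<and> card U = l \<and>
     (\<forall>i<r. hs i \<noteq> {} \<and> hs i \<subseteq> {..<N} - U) \<and>
     (\<forall>i<r. \<forall>j<r. i \<noteq> j \<longrightarrow> hs i \<inter> hs j = {}) \<and>
     {..<N} = U \<union> (\<Union>i<r. hs i) \<and>
     H = {hs i \<union> {u} | i u. i < r \<and> u \<in> U})"

end

theory Submission
  imports Defs
begin

locale flw =
  fixes N l :: nat and U A1 A2 :: "nat set" and H :: "nat set set" and r0 r1 r2 :: nat
  assumes part: "{..<N} = U \<union> A1 \<union> A2"
    and d01: "U \<inter> A1 = {}" and d02: "U \<inter> A2 = {}" and d12: "A1 \<inter> A2 = {}"
    and r0: "r0 \<in> U" and r1: "r1 \<in> A1" and r2: "r2 \<in> A2"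
    and cardU: "card U = l"
    and H_eq: "H = {A1 \<union> {u} | u. u \<in> U} \<union> {A2 \<union> {u} | u. u \<in> U}"
begin

lemma subN: "U \<subseteq> {..<N}" "A1 \<subseteq> {..<N}" "A2 \<subseteq> {..<N}"
  using part by blast+

lemma finU[simp]: "finite U" and finA1[simp]: "finite A1" and finA2[simp]: "finite A2"
  using subN finite_subset by blast+

lemma cls_simps:
  "x \<in> U \<Longrightarrow> x \<notin> A1" "x \<in> U \<Longrightarrow> x \<notin> A2"
  "x \<in> A1 \<Longrightarrow> x \<notin> U" "x \<in> A1 \<Longrightarrow> x \<notin> A2"
  "x \<in> A2 \<Longrightarrow> x \<notin> U" "x \<in> A2 \<Longrightarrow> x \<notin> A1"
  using d01 d02 d12 by auto

lemma cls_cases: "x < N \<Longrightarrow> (x \<in> U \<and> x \<notin> A1 \<and> x \<notin> A2) \<or> (x \<notin> U \<and> x \<in> A1 \<and> x \<notin> A2) \<or> (x \<notin> U \<and> x \<notin> A1 \<and> x \<in> A2)"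
  using part d01 d02 d12 by auto

lemma inN: "x < N \<longleftrightarrow> x \<in> U \<or> x \<in> A1 \<or> x \<in> A2"
  using part by auto

lemma lpos: "l > 0"
proof -
  have "U \<noteq> {}" using r0 by auto
  thus ?thesis unfolding cardU[symmetric] by (simp add: card_gt_0_iff)
qed

definition a where "a = card A1"
definition b where "b = card A2"
lemma apos: "a > 0"
proof -
  have "A1 \<noteq> {}" using r1 by auto
  thus ?thesis unfolding a_def by (simp add: card_gt_0_iff)
qed
lemma bpos: "b > 0"
proof -
  have "A2 \<noteq> {}" using r2 by auto
  thus ?thesis unfolding b_def by (simp add: card_gt_0_iff)
qed

lemma N_eq: "N = l + a + b"
proof -
  have "N = card (U \<union> A1 \<union> A2)" using part by (metis card_lessThan)
  also have "\<dots> = card (U \<union> A1) + card A2"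
    by (rule card_Un_disjoint) (use d02 d12 in auto)
  also have "card (U \<union> A1) = card U + card A1"
    by (rule card_Un_disjoint) (use d01 in auto)
  also have "card U + card A1 + card A2 = l + a + b" unfolding a_def b_def cardU ..
  finally show ?thesis .
qed

lemma A12_ne: "A1 \<union> {u} \<noteq> A2 \<union> {v}" if "u \<in> U" "v \<in> U" for u v
proof
  assume "A1 \<union> {u} = A2 \<union> {v}"
  hence "r1 \<in> A2 \<union> {v}" using r1 by auto
  thus False using r1 that cls_simps(4) cls_simps(3) by blast
qed

lemma deg_U: "u \<in> U \<Longrightarrow> hdeg H u = 2"
proof -
  assume u: "u \<in> U"
  have "{h\<in>H. u \<in> h} = {A1 \<union> {u}, A2 \<union> {u}}" using u unfolding H_eq by (auto dest: cls_simps)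
  thus ?thesis unfolding hdeg_def using A12_ne[OF u u] by simp
qed

lemma deg_A1: "w \<in> A1 \<Longrightarrow> hdeg H w = l"
proof -
  assume w: "w \<in> A1"
  have "{h\<in>H. w \<in> h} = (\<lambda>u. A1 \<union> {u}) ` U" using w unfolding H_eq by (auto dest: cls_simps)
  moreover have "inj_on (\<lambda>u. A1 \<union> {u}) U"
  proof (rule inj_onI)
    fix x y assume x: "x \<in> U" and y: "y \<in> U" and e: "A1 \<union> {x} = A1 \<union> {y}"
    hence "x \<in> A1 \<union> {y}" by auto
    thus "x = y" using x cls_simps(1) by blast
  qed
  ultimately show ?thesis unfolding hdeg_def using cardU by (simp add: card_image)
qed

lemma deg_A2: "w \<in> A2 \<Longrightarrow> hdeg H w = l"
proof -
  assume w: "w \<in> A2"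
  have "{h\<in>H. w \<in> h} = (\<lambda>u. A2 \<union> {u}) ` U" using w unfolding H_eq by (auto dest: cls_simps)
  moreover have "inj_on (\<lambda>u. A2 \<union> {u}) U"
  proof (rule inj_onI)
    fix x y assume x: "x \<in> U" and y: "y \<in> U" and e: "A2 \<union> {x} = A2 \<union> {y}"
    hence "x \<in> A2 \<union> {y}" by auto
    thus "x = y" using x cls_simps(2) by blast
  qed
  ultimately show ?thesis unfolding hdeg_def using cardU by (simp add: card_image)
qed

definition cnt where "cnt i j = card {h\<in>H. i \<in> h \<and> j \<in> h}"

lemma cnt_sym: "cnt i j = cnt j i" unfolding cnt_def by (simp add: conj_commute)

lemma cnt_UU: "i \<in> U \<Longrightarrow> j \<in> U \<Longrightarrow> i \<noteq> j \<Longrightarrow> cnt i j = 0"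
proof -
  assume "i \<in> U" "j \<in> U" "i \<noteq> j"
  hence E: "{h\<in>H. i \<in> h \<and> j \<in> h} = {}" unfolding H_eq by (auto dest: cls_simps)
  show ?thesis unfolding cnt_def E by simp
qed

lemma cnt_UA1: "i \<in> U \<Longrightarrow> j \<in> A1 \<Longrightarrow> cnt i j = 1"
proof -
  assume i: "i \<in> U" and j: "j \<in> A1"
  have "{h\<in>H. i \<in> h \<and> j \<in> h} = {A1 \<union> {i}}" using i j unfolding H_eq by (auto dest: cls_simps)
  thus ?thesis unfolding cnt_def by simp
qed

lemma cnt_UA2: "i \<in> U \<Longrightarrow> j \<in> A2 \<Longrightarrow> cnt i j = 1"
proof -
  assume i: "i \<in> U" and j: "j \<in> A2"
  have "{h\<in>H. i \<in> h \<and> j \<in> h} = {A2 \<union> {i}}" using i j unfolding H_eq by (auto dest: cls_simps)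
  thus ?thesis unfolding cnt_def by simp
qed

lemma cnt_A1A1: "i \<in> A1 \<Longrightarrow> j \<in> A1 \<Longrightarrow> cnt i j = l"
proof -
  assume i: "i \<in> A1" and j: "j \<in> A1"
  have "{h\<in>H. i \<in> h \<and> j \<in> h} = (\<lambda>u. A1 \<union> {u}) ` U" using i j unfolding H_eq by (auto dest: cls_simps)
  moreover have "inj_on (\<lambda>u. A1 \<union> {u}) U"
  proof (rule inj_onI)
    fix x y assume x: "x \<in> U" and y: "y \<in> U" and e: "A1 \<union> {x} = A1 \<union> {y}"
    hence "x \<in> A1 \<union> {y}" by auto
    thus "x = y" using x cls_simps(1) by blast
  qed
  ultimately show ?thesis unfolding cnt_def using cardU by (simp add: card_image)
qed

lemma cnt_A2A2: "i \<in> A2 \<Longrightarrow> j \<in> A2 \<Longrightarrow> cnt i j = l"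
proof -
  assume i: "i \<in> A2" and j: "j \<in> A2"
  have "{h\<in>H. i \<in> h \<and> j \<in> h} = (\<lambda>u. A2 \<union> {u}) ` U" using i j unfolding H_eq by (auto dest: cls_simps)
  moreover have "inj_on (\<lambda>u. A2 \<union> {u}) U"
  proof (rule inj_onI)
    fix x y assume x: "x \<in> U" and y: "y \<in> U" and e: "A2 \<union> {x} = A2 \<union> {y}"
    hence "x \<in> A2 \<union> {y}" by auto
    thus "x = y" using x cls_simps(2) by blast
  qed
  ultimately show ?thesis unfolding cnt_def using cardU by (simp add: card_image)
qed

lemma cnt_A1A2: "i \<in> A1 \<Longrightarrow> j \<in> A2 \<Longrightarrow> cnt i j = 0"
proof -
  assume "i \<in> A1" "j \<in> A2"
  hence E: "{h\<in>H. i \<in> h \<and> j \<in> h} = {}" unfolding H_eq by (auto dest: cls_simps)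
  show ?thesis unfolding cnt_def E by simp
qed

lemma cnt_A1U: "i \<in> A1 \<Longrightarrow> j \<in> U \<Longrightarrow> cnt i j = 1" by (subst cnt_sym) (rule cnt_UA1)
lemma cnt_A2U: "i \<in> A2 \<Longrightarrow> j \<in> U \<Longrightarrow> cnt i j = 1" by (subst cnt_sym) (rule cnt_UA2)
lemma cnt_A2A1: "i \<in> A2 \<Longrightarrow> j \<in> A1 \<Longrightarrow> cnt i j = 0" by (subst cnt_sym) (rule cnt_A1A2)
lemma lreal: "real l \<noteq> 0" using lpos by simp

definition Lf :: "nat \<Rightarrow> nat \<Rightarrow> real" where
  "Lf i j = (if i \<in> U then (if i = j then 1 else if j \<in> U then 0 else 1/2)
     else if j \<in> U then 1 / real l
     else if (i \<in> A1 \<longleftrightarrow> j \<in> A1) then 1 else 0)"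

lemma mat_mult_entry: "i < N \<Longrightarrow> j < N \<Longrightarrow>
  (mat N N f * mat N N g) $$ (i,j) = (\<Sum>k<N. f (i,k) * g (k,j))"
  by (simp add: scalar_prod_def atLeast0LessThan)

lemma adj_dims[simp]: "dim_row (adj_mat N H) = N" "dim_col (adj_mat N H) = N"
  unfolding adj_mat_def by auto

lemma L_entry: assumes "i < N" "j < N"
  shows "norm_laplacian N H $$ (i,j) = Lf i j"
proof -
  have DA: "(degree_mat_inv N H * adj_mat N H) $$ (i,j) =
     (\<Sum>k\<in>{0..<N}. (if i = k then 1 / real (hdeg H i) else 0) * adj_mat N H $$ (k,j))"
    using assms by (simp add: degree_mat_inv_def scalar_prod_def row_def col_def)
  also have "\<dots> = (\<Sum>k\<in>{0..<N}. (if k = i then 1 / real (hdeg H i) * adj_mat N H $$ (k,j) else 0))"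
    by (rule sum.cong) auto
  also have "\<dots> = 1 / real (hdeg H i) * adj_mat N H $$ (i,j)"
    by (subst sum.delta) (simp_all add: assms)
  finally have DA2: "(degree_mat_inv N H * adj_mat N H) $$ (i,j) = 1 / real (hdeg H i) * adj_mat N H $$ (i,j)" .
  have "norm_laplacian N H $$ (i,j) = (if i = j then 1 else 0) - (degree_mat_inv N H * adj_mat N H) $$ (i,j)"
    unfolding norm_laplacian_def using assms by (simp add: degree_mat_inv_def)
  also have "\<dots> = (if i = j then 1 else real (cnt i j) / real (hdeg H i))"
    unfolding DA2 using assms unfolding adj_mat_def cnt_def by simp
  also have "\<dots> = Lf i j"
  proof (cases "i = j")
    case True thus ?thesis by (simp add: Lf_def)
  next
    case False
    from cls_cases[OF assms(1)] cls_cases[OF assms(2)]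
    consider (UU) "i \<in> U" "j \<in> U" | (UA1) "i \<in> U" "j \<in> A1" "j \<notin> U" | (UA2) "i \<in> U" "j \<in> A2" "j \<notin> U"
      | (A1U) "i \<in> A1" "i \<notin> U" "j \<in> U" | (A2U) "i \<in> A2" "i \<notin> U" "j \<in> U"
      | (A11) "i \<in> A1" "j \<in> A1" "i \<notin> U" "j \<notin> U"
      | (A22) "i \<in> A2" "j \<in> A2" "i \<notin> U" "j \<notin> U" "i \<notin> A1" "j \<notin> A1"
      | (A12) "i \<in> A1" "j \<in> A2" "i \<notin> U" "j \<notin> U" "j \<notin> A1"
      | (A21) "i \<in> A2" "j \<in> A1" "i \<notin> U" "j \<notin> U" "i \<notin> A1"
      by blast
    then show ?thesis
    proof cases
      case UU thus ?thesis using False by (simp add: Lf_def cnt_UU)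
    next
      case UA1 thus ?thesis using False by (simp add: Lf_def cnt_UA1 deg_U)
    next
      case UA2 thus ?thesis using False by (simp add: Lf_def cnt_UA2 deg_U)
    next
      case A1U thus ?thesis using False by (simp add: Lf_def cnt_A1U deg_A1)
    next
      case A2U thus ?thesis using False by (simp add: Lf_def cnt_A2U deg_A2)
    next
      case A11 thus ?thesis using False lreal by (simp add: Lf_def cnt_A1A1 deg_A1)
    next
      case A22 thus ?thesis using False lreal by (simp add: Lf_def cnt_A2A2 deg_A2)
    next
      case A12 thus ?thesis using False by (simp add: Lf_def cnt_A1A2 deg_A1)
    next
      case A21 thus ?thesis using False by (simp add: Lf_def cnt_A2A1 deg_A2)
    qed
  qed
  finally show ?thesis .
qed


definition cls :: "nat \<Rightarrow> nat" where "cls k = (if k \<in> U then 0 else if k \<in> A1 then 1 else 2)"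
definition sz :: "nat \<Rightarrow> real" where "sz c = (if c = 0 then real l else if c = 1 then real a else real b)"
definition rep :: "nat \<Rightarrow> nat" where "rep j = (if cls j = 0 then r0 else if cls j = 1 then r1 else r2)"
definition isrep :: "nat \<Rightarrow> bool" where "isrep j \<longleftrightarrow> j = r0 \<or> j = r1 \<or> j = r2"
definition dl :: "nat \<Rightarrow> nat \<Rightarrow> real" where "dl x k = (if k = x then 1 else 0)"

lemma cls_U: "k \<in> U \<Longrightarrow> cls k = 0" and cls_A1: "k \<in> A1 \<Longrightarrow> cls k = 1" and cls_A2: "k \<in> A2 \<Longrightarrow> cls k = 2"
  unfolding cls_def by (auto dest: cls_simps)

lemma cls_r[simp]: "cls r0 = 0" "cls r1 = 1" "cls r2 = 2"
  using cls_U[OF r0] cls_A1[OF r1] cls_A2[OF r2] .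

lemma r_ne[simp]: "r0 \<noteq> r1" "r0 \<noteq> r2" "r1 \<noteq> r2" "r1 \<noteq> r0" "r2 \<noteq> r0" "r2 \<noteq> r1"
proof -
  have d: "(0::nat) \<noteq> 1" "(0::nat) \<noteq> 2" "(1::nat) \<noteq> 2" by auto
  show "r0 \<noteq> r1" "r0 \<noteq> r2" "r1 \<noteq> r2" "r1 \<noteq> r0" "r2 \<noteq> r0" "r2 \<noteq> r1"
    using cls_r d by metis+
qed

lemma r_lt[simp]: "r0 < N" "r1 < N" "r2 < N" using inN r0 r1 r2 by auto

lemma cls_le: "cls k = 0 \<or> cls k = 1 \<or> cls k = 2" unfolding cls_def by auto

lemma rep_cls[simp]: "cls (rep j) = cls j" unfolding rep_def using cls_le[of j] by auto
lemma rep_lt[simp]: "rep j < N" unfolding rep_def by auto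
lemma isrep_rep[simp]: "isrep (rep j)" unfolding rep_def isrep_def by auto

end


lemma det_two_block:
  fixes A :: "'a::comm_ring_1 mat"
  assumes A: "A \<in> carrier_mat n n" and s: "s < n" and t: "t < n" and st: "s \<noteq> t"
    and diag: "\<And>i j. i < n \<Longrightarrow> j < n \<Longrightarrow> i \<noteq> j \<Longrightarrow> j \<noteq> s \<Longrightarrow> j \<noteq> t \<Longrightarrow> A $$ (i,j) = 0"
  shows "det A = (\<Prod>j\<in>{0..<n}-{s,t}. A $$ (j,j)) * (A $$ (s,s) * A $$ (t,t) - A $$ (s,t) * A $$ (t,s))"
proof -
  let ?f = "\<lambda>p. signof p * (\<Prod>i = 0..<n. A $$ (i, p i))"
  let ?P = "{p. p permutes {0..<n}}"
  let ?sw = "Transposition.transpose s t"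
  have fin: "finite ?P" by (simp add: finite_permutations)
  have sub: "{id, ?sw} \<subseteq> ?P" using s t by (auto simp: permutes_id permutes_swap_id)
  have zero: "?f p = 0" if p: "p \<in> ?P - {id, ?sw}" for p
  proof (rule ccontr)
    assume "?f p \<noteq> 0"
    hence nz: "\<And>i. i < n \<Longrightarrow> A $$ (i, p i) \<noteq> 0"
    proof (intro notI)
      fix i assume "?f p \<noteq> 0" "i < n" "A $$ (i, p i) = 0"
      hence "(\<Prod>i = 0..<n. A $$ (i, p i)) = 0" by (intro prod_zero) auto
      thus False using \<open>?f p \<noteq> 0\<close> by simp
    qed
    have pp: "p permutes {0..<n}" using p by auto
    have pn: "\<And>i. i < n \<Longrightarrow> p i < n" using pp permutes_in_image by fastforce
    have fix1: "p i = i" if "i < n" "p i \<noteq> s" "p i \<noteq> t" for i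
      using diag[OF that(1) pn[OF that(1)]] nz[OF that(1)] that by metis
    have ps: "p s \<in> {s,t}" using fix1[OF s] by auto
    have pt: "p t \<in> {s,t}" using fix1[OF t] by auto
    have inj: "inj p" using pp permutes_inj by blast
    have pst: "p s \<noteq> p t" using inj st by (meson injD)
    have other: "p i = i" if "i \<notin> {s,t}" for i
    proof (cases "i < n")
      case True
      have "p i \<noteq> s \<and> p i \<noteq> t" using ps pt pst inj that by (metis injD insert_iff singletonD)
      thus ?thesis using fix1[OF True] by auto
    next
      case False thus ?thesis using pp by (simp add: permutes_not_in)
    qed
    have "p = id \<or> p = ?sw"
    proof (cases "p s = s")
      case True
      hence "p t = t" using pt pst by auto
      hence "p = id" using True other by (intro ext) (metis id_apply insertE singletonD)
      thus ?thesis by simp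
    next
      case False
      hence "p s = t" "p t = s" using ps pt pst by auto
      hence "p = ?sw" using other by (intro ext) (auto simp: Transposition.transpose_def)
      thus ?thesis by simp
    qed
    thus False using p by auto
  qed
  have "det A = sum ?f ?P" by (rule det_def'[OF A])
  also have "\<dots> = sum ?f {id, ?sw}"
    by (rule sum.mono_neutral_right[OF fin sub]) (use zero in auto)
  also have "\<dots> = ?f id + ?f ?sw" using st
    by (subst sum.insert) (auto simp: fun_eq_iff Transposition.transpose_def)
  also have "?f id + ?f ?sw = (\<Prod>j\<in>{0..<n}-{s,t}. A $$ (j,j)) * (A $$ (s,s) * A $$ (t,t) - A $$ (s,t) * A $$ (t,s))"
  proof -
    have I: "{0..<n} = insert s (insert t ({0..<n}-{s,t}))" using s t by auto
    have e: "(\<Prod>i \<in> {0..<n}-{s,t}. A $$ (i, ?sw i)) = (\<Prod>j\<in>{0..<n}-{s,t}. A $$ (j,j))"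
      by (rule prod.cong) auto
    have p1: "(\<Prod>i = 0..<n. A $$ (i, id i)) = A $$ (s,s) * (A $$ (t,t) * (\<Prod>j\<in>{0..<n}-{s,t}. A $$ (j,j)))"
      using st by (subst I, simp)
    have p2: "(\<Prod>i = 0..<n. A $$ (i, ?sw i)) = A $$ (s,t) * (A $$ (t,s) * (\<Prod>j\<in>{0..<n}-{s,t}. A $$ (j,j)))"
      using st e by (subst I, simp)
    show ?thesis using st by (simp only: p1 p2) (simp add: sign_swap_id algebra_simps)
  qed
  finally show ?thesis .
qed


context flw begin
lemma sumN: "(\<Sum>k\<in>{0..<N}. f k) = (\<Sum>k\<in>U. f k) + (\<Sum>k\<in>A1. f k) + (\<Sum>k\<in>A2. f k)"
proof -
  have e: "{0..<N} = U \<union> A1 \<union> A2" using part by (simp add: atLeast0LessThan)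
  have "(\<Sum>k\<in>U \<union> A1 \<union> A2. f k) = (\<Sum>k\<in>U \<union> A1. f k) + (\<Sum>k\<in>A2. f k)"
    by (rule sum.union_disjoint) (use d02 d12 in auto)
  also have "(\<Sum>k\<in>U \<union> A1. f k) = (\<Sum>k\<in>U. f k) + (\<Sum>k\<in>A1. f k)"
    by (rule sum.union_disjoint) (use d01 in auto)
  finally show ?thesis unfolding e .
qed
lemma sum_cls: "(\<Sum>k\<in>{0..<N}. g (cls k)) = real l * g 0 + real a * g 1 + real b * g 2"
proof -
  have "(\<Sum>k\<in>U. g (cls k)) = (\<Sum>k\<in>U. g 0)" by (rule sum.cong) (auto simp: cls_U)
  moreover have "(\<Sum>k\<in>A1. g (cls k)) = (\<Sum>k\<in>A1. g 1)" by (rule sum.cong) (auto simp: cls_A1)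
  moreover have "(\<Sum>k\<in>A2. g (cls k)) = (\<Sum>k\<in>A2. g 2)" by (rule sum.cong) (auto simp: cls_A2)
  ultimately show ?thesis unfolding sumN using cardU by (simp add: a_def b_def)
qed

lemma sum_dl: "x < N \<Longrightarrow> (\<Sum>k\<in>{0..<N}. dl x k * f k) = f x"
  unfolding dl_def by (simp add: if_distrib[of "\<lambda>y. y * _"] sum.delta cong: if_cong)

lemma sum_dl': "x < N \<Longrightarrow> (\<Sum>k\<in>{0..<N}. f k * dl x k) = f x"
  using sum_dl[of x f] by (simp add: mult.commute)

definition zc :: "nat \<Rightarrow> real" where
  "zc c = (if c = 0 then real a * real b else if c = 1 then - real b else - real a)"

definition Pf :: "nat \<Rightarrow> nat \<Rightarrow> real" where
  "Pf j k = (if j = r0 then zc (cls k) else if j = r1 then (if cls k = 1 then 1 else 0)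
     else if j = r2 then (if cls k = 2 then 1 else 0) else dl j k - dl (rep j) k)"

lemma row_times_P:
  fixes al :: real and G :: "nat \<Rightarrow> real"
  assumes x: "x < N" and j: "j < N"
  shows "(\<Sum>k\<in>{0..<N}. (al * dl x k + G (cls k)) * Pf j k) =
    (if j = r0 then al * zc (cls x) + real l * G 0 * zc 0 + real a * G 1 * zc 1 + real b * G 2 * zc 2
     else if j = r1 then al * (if cls x = 1 then 1 else 0) + real a * G 1
     else if j = r2 then al * (if cls x = 2 then 1 else 0) + real b * G 2
     else al * (dl j x - dl (rep j) x))"
proof -
  have split: "(\<Sum>k\<in>{0..<N}. (al * dl x k + G (cls k)) * Pf j k) =
     al * (\<Sum>k\<in>{0..<N}. dl x k * Pf j k) + (\<Sum>k\<in>{0..<N}. G (cls k) * Pf j k)"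
    by (simp add: algebra_simps sum.distrib sum_distrib_left)
  have e1: "(\<Sum>k\<in>{0..<N}. dl x k * Pf j k) = Pf j x" using sum_dl[OF x] .
  show ?thesis
  proof (cases "j = r0")
    case True
    have "(\<Sum>k\<in>{0..<N}. G (cls k) * Pf j k) = (\<Sum>k\<in>{0..<N}. (\<lambda>c. G c * zc c) (cls k))"
      using True by (simp add: Pf_def)
    also have "\<dots> = real l * G 0 * zc 0 + real a * G 1 * zc 1 + real b * G 2 * zc 2"
      by (subst sum_cls) (simp add: algebra_simps)
    finally show ?thesis unfolding split e1 using True by (simp add: Pf_def)
  next
    case F0: False
    show ?thesis
    proof (cases "j = r1")
      case True
      have "(\<Sum>k\<in>{0..<N}. G (cls k) * Pf j k) = (\<Sum>k\<in>{0..<N}. (\<lambda>c. G c * (if c = 1 then 1 else 0)) (cls k))"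
        using True by (simp add: Pf_def)
      also have "\<dots> = real a * G 1"
        by (subst sum_cls) simp
      finally show ?thesis unfolding split e1 using True by (simp add: Pf_def)
    next
      case F1: False
      show ?thesis
      proof (cases "j = r2")
        case True
        have "(\<Sum>k\<in>{0..<N}. G (cls k) * Pf j k) = (\<Sum>k\<in>{0..<N}. (\<lambda>c. G c * (if c = 2 then 1 else 0)) (cls k))"
          using True by (simp add: Pf_def)
        also have "\<dots> = real b * G 2"
          by (subst sum_cls) simp
        finally show ?thesis unfolding split e1 using True by (simp add: Pf_def)
      next
        case F2: False
        have "(\<Sum>k\<in>{0..<N}. G (cls k) * Pf j k) = (\<Sum>k\<in>{0..<N}. G (cls k) * dl j k) - (\<Sum>k\<in>{0..<N}. G (cls k) * dl (rep j) k)"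
          using F0 F1 F2 by (simp add: Pf_def algebra_simps sum_subtractf)
        also have "\<dots> = 0" using j by (simp add: sum_dl')
        finally show ?thesis unfolding split e1 using F0 F1 F2 by (simp add: Pf_def)
      qed
    qed
  qed
qed


lemma nz: "l \<noteq> 0" "a \<noteq> 0" "b \<noteq> 0" using lpos apos bpos by auto
lemma rep_r: "rep j = r0 \<or> rep j = r1 \<or> rep j = r2" using isrep_rep[of j] unfolding isrep_def .
lemma areal: "real a \<noteq> 0" using apos by simp
lemma breal: "real b \<noteq> 0" using bpos by simp

definition Qa :: "nat \<Rightarrow> real" where "Qa x = (if isrep x then 0 else 1)"
definition Qg :: "nat \<Rightarrow> nat \<Rightarrow> real" where
  "Qg x c = (if x = r0 then (if c = 0 then 1 / (real l * real a * real b) else 0)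
     else if x = r1 then (if c = 1 then 1 / real a else if c = 0 then 1 / (real l * real a) else 0)
     else if x = r2 then (if c = 2 then 1 / real b else if c = 0 then 1 / (real l * real b) else 0)
     else (if c = cls x then - 1 / sz c else 0))"

lemma cases_x:
  obtains "x = r0" | "x = r1" | "x = r2" | "\<not> isrep x" "cls x = 0" | "\<not> isrep x" "cls x = 1" | "\<not> isrep x" "cls x = 2"
  using cls_le[of x] unfolding isrep_def by auto

lemma cases_j:
  obtains "j = r0" | "j = r1" | "j = r2" | "\<not> isrep j" "j \<noteq> r0" "j \<noteq> r1" "j \<noteq> r2"
  unfolding isrep_def by auto

lemma nonrep_ne: "\<not> isrep x \<Longrightarrow> x \<noteq> rep j" using isrep_rep by metis

lemma QP_entry: assumes x: "x < N" and j: "j < N"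
  shows "(\<Sum>k\<in>{0..<N}. (Qa x * dl x k + Qg x (cls k)) * Pf j k) = (if x = j then 1 else 0)"
  unfolding row_times_P[OF x j] using rep_r[of j]
proof (cases x rule: cases_x; cases j rule: cases_j)
qed (auto simp: Qa_def Qg_def zc_def sz_def dl_def isrep_def field_simps lreal areal breal nz dest: nonrep_ne)


definition La :: "nat \<Rightarrow> real" where "La i = (if cls i = 0 then 1 else 0)"
definition Lg :: "nat \<Rightarrow> nat \<Rightarrow> real" where
  "Lg i c = (if cls i = 0 then (if c = 0 then 0 else 1/2)
     else (if c = 0 then 1 / real l else if c = cls i then 1 else 0))"

lemma Lf_dec: assumes i: "i < N" and k: "k < N"
  shows "Lf i k = La i * dl i k + Lg i (cls k)"
  by (cases "i \<in> U"; cases "k \<in> U"; cases "i \<in> A1"; cases "k \<in> A1"; auto simp add: Lf_def La_def Lg_def dl_def cls_def)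

definition Tc :: "nat \<Rightarrow> nat \<Rightarrow> real" where
  "Tc j k = (if j = r1 then dl r0 k * (1 / (2 * real b)) + dl r1 k * (real a + 1/2) + dl r2 k * (real a / (2 * real b))
     else if j = r2 then dl r0 k * (1 / (2 * real a)) + dl r1 k * (real b / (2 * real a)) + dl r2 k * (real b + 1/2)
     else if cls j = 0 \<and> j \<noteq> r0 then dl j k else 0)"

lemma sum_dl3: assumes "x < N" "y < N" "z < N"
  shows "(\<Sum>k\<in>{0..<N}. f k * (dl x k * c + dl y k * d + dl z k * e)) = f x * c + f y * d + f z * e"
proof -
  have "(\<Sum>k\<in>{0..<N}. f k * (dl x k * c + dl y k * d + dl z k * e)) =
    (\<Sum>k\<in>{0..<N}. f k * dl x k) * c + (\<Sum>k\<in>{0..<N}. f k * dl y k) * d + (\<Sum>k\<in>{0..<N}. f k * dl z k) * e"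
    by (simp add: sum.distrib sum_distrib_right sum_distrib_left algebra_simps)
  thus ?thesis using assms by (simp add: sum_dl')
qed

lemma PT_sum: assumes i: "i < N" and j: "j < N"
  shows "(\<Sum>k\<in>{0..<N}. Pf k i * Tc j k) =
    (if j = r1 then Pf r0 i * (1 / (2 * real b)) + Pf r1 i * (real a + 1/2) + Pf r2 i * (real a / (2 * real b))
     else if j = r2 then Pf r0 i * (1 / (2 * real a)) + Pf r1 i * (real b / (2 * real a)) + Pf r2 i * (real b + 1/2)
     else if cls j = 0 \<and> j \<noteq> r0 then Pf j i else 0)"
proof (cases "j = r1")
  case True
  have "(\<Sum>k\<in>{0..<N}. Pf k i * Tc j k) = (\<Sum>k\<in>{0..<N}. Pf k i * (dl r0 k * (1 / (2 * real b)) + dl r1 k * (real a + 1/2) + dl r2 k * (real a / (2 * real b))))"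
    by (rule sum.cong) (simp_all add: Tc_def True)
  also have "\<dots> = Pf r0 i * (1 / (2 * real b)) + Pf r1 i * (real a + 1/2) + Pf r2 i * (real a / (2 * real b))"
    by (rule sum_dl3) simp_all
  finally show ?thesis using True by simp
next
  case F1: False
  show ?thesis
  proof (cases "j = r2")
    case True
    have "(\<Sum>k\<in>{0..<N}. Pf k i * Tc j k) = (\<Sum>k\<in>{0..<N}. Pf k i * (dl r0 k * (1 / (2 * real a)) + dl r1 k * (real b / (2 * real a)) + dl r2 k * (real b + 1/2)))"
      by (rule sum.cong) (simp_all add: Tc_def True)
    also have "\<dots> = Pf r0 i * (1 / (2 * real a)) + Pf r1 i * (real b / (2 * real a)) + Pf r2 i * (real b + 1/2)"
      by (rule sum_dl3) simp_all
    finally show ?thesis using True by simp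
  next
    case F2: False
    thus ?thesis using F1 j unfolding Tc_def by (simp add: sum_dl')
  qed
qed

lemma cls_ne: "cls i \<noteq> cls j \<Longrightarrow> i \<noteq> j" by auto

lemma LP_PT: assumes i: "i < N" and j: "j < N"
  shows "(\<Sum>k\<in>{0..<N}. (La i * dl i k + Lg i (cls k)) * Pf j k) = (\<Sum>k\<in>{0..<N}. Pf k i * Tc j k)"
proof (cases j rule: cases_j)
  case 1 thus ?thesis unfolding row_times_P[OF i j] PT_sum[OF i j] using cls_le[of i] by (auto simp: La_def Lg_def zc_def field_simps lreal areal breal nz)
next
  case 2 thus ?thesis unfolding row_times_P[OF i j] PT_sum[OF i j] using cls_le[of i] by (auto simp: La_def Lg_def zc_def Pf_def field_simps lreal areal breal nz)
next
  case 3 thus ?thesis unfolding row_times_P[OF i j] PT_sum[OF i j] using cls_le[of i] by (auto simp: La_def Lg_def zc_def Pf_def field_simps lreal areal breal nz)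
next
  case 4 thus ?thesis unfolding row_times_P[OF i j] PT_sum[OF i j] using cls_le[of i] rep_r[of j] by (auto simp: La_def Pf_def dl_def rep_def dest: cls_ne)
qed


definition Pm where "Pm = mat N N (\<lambda>(k,j). Pf j k)"
definition Qm where "Qm = mat N N (\<lambda>(x,k). Qa x * dl x k + Qg x (cls k))"
definition Tm where "Tm = mat N N (\<lambda>(k,j). Tc j k)"
definition Lm where "Lm = mat N N (\<lambda>(i,k). La i * dl i k + Lg i (cls k))"

lemma mult_entry0: "i < N \<Longrightarrow> j < N \<Longrightarrow>
  (mat N N f * mat N N g) $$ (i,j) = (\<Sum>k\<in>{0..<N}. f (i,k) * g (k,j))"
  by (simp add: scalar_prod_def)

lemma carr: "Pm \<in> carrier_mat N N" "Qm \<in> carrier_mat N N" "Tm \<in> carrier_mat N N" "Lm \<in> carrier_mat N N"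
  unfolding Pm_def Qm_def Tm_def Lm_def by auto

lemma L_is_Lm: "norm_laplacian N H = Lm"
proof (rule eq_matI)
  show "dim_row (norm_laplacian N H) = dim_row Lm" "dim_col (norm_laplacian N H) = dim_col Lm"
    unfolding norm_laplacian_def Lm_def degree_mat_inv_def by auto
  fix i j assume "i < dim_row Lm" "j < dim_col Lm"
  hence ij: "i < N" "j < N" unfolding Lm_def by auto
  show "norm_laplacian N H $$ (i,j) = Lm $$ (i,j)"
    unfolding L_entry[OF ij] Lf_dec[OF ij] Lm_def using ij by simp
qed

lemma QP: "Qm * Pm = 1\<^sub>m N"
proof (rule eq_matI)
  show "dim_row (Qm * Pm) = dim_row (1\<^sub>m N)" "dim_col (Qm * Pm) = dim_col (1\<^sub>m N)"
    unfolding Pm_def Qm_def by auto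
  fix i j assume "i < dim_row (1\<^sub>m N)" "j < dim_col (1\<^sub>m N)"
  hence ij: "i < N" "j < N" by auto
  show "(Qm * Pm) $$ (i,j) = 1\<^sub>m N $$ (i,j)"
    unfolding Qm_def Pm_def mult_entry0[OF ij] using QP_entry[OF ij] ij by simp
qed

lemma PQ: "Pm * Qm = 1\<^sub>m N"
  using mat_mult_left_right_inverse[OF carr(2) carr(1) QP] .

lemma LP: "Lm * Pm = Pm * Tm"
proof (rule eq_matI)
  show "dim_row (Lm * Pm) = dim_row (Pm * Tm)" "dim_col (Lm * Pm) = dim_col (Pm * Tm)"
    unfolding Pm_def Lm_def Tm_def by auto
  fix i j assume "i < dim_row (Pm * Tm)" "j < dim_col (Pm * Tm)"
  hence ij: "i < N" "j < N" unfolding Pm_def Tm_def by auto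
  show "(Lm * Pm) $$ (i,j) = (Pm * Tm) $$ (i,j)"
    unfolding Lm_def Pm_def Tm_def mult_entry0[OF ij] using LP_PT[OF ij] ij by simp
qed

lemma sim: "similar_mat Lm Tm"
proof -
  have "Lm = Lm * (Pm * Qm)" unfolding PQ using carr by simp
  also have "\<dots> = (Lm * Pm) * Qm" using carr by (simp add: assoc_mult_mat)
  also have "\<dots> = Pm * Tm * Qm" unfolding LP ..
  finally have e: "Lm = Pm * Tm * Qm" .
  have "similar_mat_wit Lm Tm Pm Qm"
    unfolding similar_mat_wit_def Let_def using carr PQ QP e
    by (auto simp: Lm_def)
  thus ?thesis unfolding similar_mat_def by blast
qed


lemma Tc_r: "Tc r1 r1 = real a + 1/2" "Tc r2 r2 = real b + 1/2"
  "Tc r2 r1 = real b / (2 * real a)" "Tc r1 r2 = real a / (2 * real b)"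
  unfolding Tc_def dl_def by auto

lemma Tc_off: "j \<noteq> r1 \<Longrightarrow> j \<noteq> r2 \<Longrightarrow> i \<noteq> j \<Longrightarrow> Tc j i = 0"
  unfolding Tc_def dl_def by auto

lemma cls0: "cls j = 0 \<longleftrightarrow> j \<in> U" by (simp add: cls_def)
lemma r12U: "r1 \<notin> U" "r2 \<notin> U" using cls_simps(3)[OF r1] cls_simps(5)[OF r2] .

lemma Tc_diag: "j \<noteq> r1 \<Longrightarrow> j \<noteq> r2 \<Longrightarrow> j < N \<Longrightarrow> Tc j j = (if j \<in> U - {r0} then 1 else 0)"
  unfolding Tc_def dl_def by (auto simp: cls0)

lemma cpm_entry: "i < N \<Longrightarrow> j < N \<Longrightarrow>
  char_poly_matrix Tm $$ (i,j) = (if i = j then [:0,1:] else 0) + [:- Tc j i:]"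
  unfolding char_poly_matrix_def Tm_def by simp

lemma card_S: "card ({0..<N} - {r1,r2}) = N - 2"
  by (subst card_Diff_subset) auto

lemma card_U0: "card (U - {r0}) = l - 1" using r0 cardU by simp

lemma charT: "char_poly Tm = [:0,1:] ^ (N - l - 1) * [:-1,1:] ^ (l - 1) *
   ([:-(real a + 1/2), 1:] * [:-(real b + 1/2), 1:] - [:1/4:])"
proof -
  let ?M = "char_poly_matrix Tm"
  let ?S = "{0..<N} - {r1,r2}"
  have M: "?M \<in> carrier_mat N N" using carr(3) by simp
  have "char_poly Tm = det ?M" unfolding char_poly_def ..
  also have "\<dots> = (\<Prod>j\<in>?S. ?M $$ (j,j)) * (?M $$ (r1,r1) * ?M $$ (r2,r2) - ?M $$ (r1,r2) * ?M $$ (r2,r1))"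
    by (rule det_two_block[OF M]) (auto simp: cpm_entry Tc_off)
  also have "(\<Prod>j\<in>?S. ?M $$ (j,j)) = (\<Prod>j\<in>?S. if j \<in> U - {r0} then [:-1,1:] else [:0,1:])"
    by (rule prod.cong) (auto simp: cpm_entry Tc_diag)
  also have "\<dots> = (\<Prod>j\<in>?S \<inter> {j. j \<in> U - {r0}}. [:-1,1:]) * (\<Prod>j\<in>?S \<inter> - {j. j \<in> U - {r0}}. [:0,1:])"
    by (rule prod.If_cases) simp
  also have "?S \<inter> {j. j \<in> U - {r0}} = U - {r0}" using subN(1) r12U by auto
  also have "?S \<inter> - {j. j \<in> U - {r0}} = ?S - (U - {r0})" by auto
  also have "card (?S - (U - {r0})) = N - l - 1"
  proof -
    have "U - {r0} \<subseteq> ?S" using subN(1) r12U by auto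
    hence "card (?S - (U - {r0})) = card ?S - card (U - {r0})" by (simp add: card_Diff_subset)
    thus ?thesis unfolding card_S card_U0 using N_eq lpos apos bpos by simp
  qed
  hence "(\<Prod>j\<in>?S - (U - {r0}). [:0,1:]) = [:0,1::real:] ^ (N - l - 1)" by simp
  also have "(\<Prod>j\<in>U - {r0}. [:-1,1:]) = [:-1,1::real:] ^ (l - 1)" using card_U0 by simp
  also have "?M $$ (r1,r1) * ?M $$ (r2,r2) - ?M $$ (r1,r2) * ?M $$ (r2,r1) =
     [:-(real a + 1/2), 1:] * [:-(real b + 1/2), 1:] - [:1/4:]"
    using nz by (simp add: cpm_entry Tc_r)
  finally show ?thesis by (simp add: algebra_simps)
qed


definition Dd :: real where "Dd = 1 + (real a - real b)^2"
definition lm :: real where "lm = (real a + real b + 1 - sqrt Dd) / 2"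
definition lp :: real where "lp = (real a + real b + 1 + sqrt Dd) / 2"

lemma Dd_ge: "Dd \<ge> 1" unfolding Dd_def by simp

lemma sqrtD: "sqrt Dd ^ 2 = Dd" using Dd_ge by simp

lemma quad_fact: "[:-(real a + 1/2), 1:] * [:-(real b + 1/2), 1:] - [:1/4:] = [:-lm, 1:] * [:-lp, 1:]"
proof -
  have p: "lm * lp = (real a + 1/2) * (real b + 1/2) - 1/4"
  proof -
    have "lm * lp = ((real a + real b + 1)^2 - sqrt Dd ^ 2) / 4"
      unfolding lm_def lp_def by (simp add: power2_eq_square algebra_simps)
    also have "\<dots> = ((real a + real b + 1)^2 - Dd) / 4" using sqrtD by simp
    finally show ?thesis unfolding Dd_def by (simp add: power2_eq_square algebra_simps)
  qed
  have s: "lm + lp = real a + real b + 1" unfolding lm_def lp_def by (simp add: field_simps)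
  show ?thesis using p s by (simp add: algebra_simps)
qed

lemma lm_ge1: "lm \<ge> 1"
proof -
  have a1: "real a \<ge> 1" "real b \<ge> 1" using apos bpos by auto
  have m1: "real a * real b \<ge> real a" "real a * real b \<ge> real b"
    using mult_left_mono[OF a1(2), of "real a"] mult_right_mono[OF a1(1), of "real b"] by auto
  have "Dd \<le> (real a + real b - 1)^2"
    unfolding Dd_def using m1 by (simp add: power2_eq_square algebra_simps)
  hence "sqrt Dd \<le> sqrt ((real a + real b - 1)^2)" by (rule real_sqrt_le_mono)
  also have "\<dots> = real a + real b - 1" using a1 by simp
  finally show ?thesis unfolding lm_def by simp
qed

lemma lm_lt_lp: "lm < lp" unfolding lm_def lp_def using Dd_ge by simp

definition L0 :: "real list" where "L0 = replicate (N - l - 1) 0 @ replicate (l - 1) 1 @ [lm, lp]"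

lemma char_L: "char_poly (norm_laplacian N H) = prod_list (map (\<lambda>y. [:-y, 1:]) L0)"
proof -
  have "char_poly (norm_laplacian N H) = char_poly Tm" unfolding L_is_Lm by (rule char_poly_similar[OF sim])
  also have "\<dots> = prod_list (map (\<lambda>y. [:-y, 1:]) L0)"
    unfolding charT quad_fact L0_def by (simp add: prod_list_replicate algebra_simps)
  finally show ?thesis .
qed

end

lemma prod_list_nth: "prod_list (map f xs) = (\<Prod>i<length xs. f (xs ! i))"
proof (induction xs rule: rev_induct)
  case Nil thus ?case by simp
next
  case (snoc x xs) thus ?case by (simp add: nth_append)
qed

lemma order_prod_lin: "order (x::real) (prod_list (map (\<lambda>y. [:-y, 1:]) xs)) = count (mset xs) x"
proof (induction xs)
  case Nil
  have "order x 1 = 0" by (rule order_0I) simp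
  thus ?case by simp
next
  case (Cons y xs)
  have nz: "prod_list (map (\<lambda>y. [:-y, 1:]) xs) \<noteq> (0::real poly)"
    by (auto simp: prod_list_zero_iff)
  have "order x ([:-y, 1:] * prod_list (map (\<lambda>y. [:-y, 1:]) xs)) =
     order x [:-y, 1:] + order x (prod_list (map (\<lambda>y. [:-y, 1:]) xs))"
  proof (rule Polynomial.order_mult)
    have "[:-y, 1:] \<noteq> (0::real poly)" by simp
    thus "[:-y, 1:] * prod_list (map (\<lambda>y. [:-y, 1:]) xs) \<noteq> 0" using nz by (metis mult_eq_0_iff)
  qed
  moreover have "order x [:-y, 1:] = (if x = y then 1 else 0)"
  proof (cases "x = y")
    case True thus ?thesis using order_power_n_n[of y 1] by simp
  next
    case False
    have "order x [:-y, 1:] = 0" by (rule order_0I) (use False in simp)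
    thus ?thesis using False by simp
  qed
  ultimately show ?case using Cons by simp
qed

theorem mainTheorem5:
  fixes N l :: nat and H :: "nat set set" and ls :: "real list"
  assumes "hypergraph N H"
    and "hyperflower l 2 N H"
    and "is_sorted_spectrum N H ls"
  shows "count (mset ls) 0 = N - l - 1
    \<and> count (mset ls) 1 \<ge> l - 1
    \<and> ls ! (N - 1) > 1
    \<and> ls ! (N - 2) = real N - ls ! (N - 1) - real l + 1
    \<and> ls ! (N - 2) \<ge> 1
    \<and> ((\<exists>c. \<forall>h\<in>H. card h = c) \<longrightarrow>
         ls ! (N - 1) = (real N - real l) / 2 + 1 \<and> ls ! (N - 2) = (real N - real l) / 2)"
proof -
  obtain U and hs :: "nat \<Rightarrow> nat set" where Usub: "U \<subseteq> {..<N}" and cU: "card U = l"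
    and hs: "\<forall>i<2. hs i \<noteq> {} \<and> hs i \<subseteq> {..<N} - U"
    and hdisj: "\<forall>i<2. \<forall>j<2. i \<noteq> j \<longrightarrow> hs i \<inter> hs j = {}"
    and cover: "{..<N} = U \<union> (\<Union>i<2. hs i)"
    and Heq: "H = {hs i \<union> {u} | i u. i < 2 \<and> u \<in> U}"
    using assms(2) unfolding hyperflower_def by blast
  have two: "{..<2::nat} = {0, 1}" by auto
  have h0: "hs 0 \<noteq> {}" "hs 0 \<subseteq> {..<N} - U" and h1: "hs 1 \<noteq> {}" "hs 1 \<subseteq> {..<N} - U"
    using hs[rule_format, of 0] hs[rule_format, of 1] by auto
  have d12: "hs 0 \<inter> hs 1 = {}" using hdisj[rule_format, of 0 1] by simp
  have "(\<Union>i<2. hs i) = hs 0 \<union> hs 1" unfolding two by simp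
  hence part: "{..<N} = U \<union> hs 0 \<union> hs 1" using cover by (simp add: Un_assoc)
  have Heq2: "H = {hs 0 \<union> {u} | u. u \<in> U} \<union> {hs 1 \<union> {u} | u. u \<in> U}"
  proof -
    have i2: "\<And>i::nat. i < 2 \<longleftrightarrow> i = 0 \<or> i = 1" by auto
    show ?thesis unfolding Heq
    proof (rule Set.set_eqI)
      fix h
      show "h \<in> {hs i \<union> {u} | i u. i < 2 \<and> u \<in> U} \<longleftrightarrow>
            h \<in> {hs 0 \<union> {u} | u. u \<in> U} \<union> {hs 1 \<union> {u} | u. u \<in> U}"
      proof
        assume "h \<in> {hs i \<union> {u} | i u. i < 2 \<and> u \<in> U}"
        then obtain i u where hi: "h = hs i \<union> {u}" "i < 2" "u \<in> U" by auto
        have "i = 0 \<or> i = 1" using i2 hi(2) by simp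
        thus "h \<in> {hs 0 \<union> {u} | u. u \<in> U} \<union> {hs 1 \<union> {u} | u. u \<in> U}"
        proof
          assume "i = 0" thus ?thesis using hi by auto
        next
          assume "i = 1" thus ?thesis using hi by auto
        qed
      next
        assume "h \<in> {hs 0 \<union> {u} | u. u \<in> U} \<union> {hs 1 \<union> {u} | u. u \<in> U}"
        then obtain i u where hi: "h = hs i \<union> {u}" "i < 2" "u \<in> U"
        proof (elim UnE CollectE exE conjE)
          fix u assume "h = hs 0 \<union> {u}" "u \<in> U"
          moreover have "(0::nat) < 2" by simp
          ultimately show thesis using that by metis
        next
          fix u assume "h = hs 1 \<union> {u}" "u \<in> U"
          moreover have "(1::nat) < 2" by simp
          ultimately show thesis using that by metis
        qed
        thus "h \<in> {hs i \<union> {u} | i u. i < 2 \<and> u \<in> U}" by auto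
      qed
    qed
  qed
  obtain r1 where r1: "r1 \<in> hs 0" using h0 by blast
  obtain r2 where r2: "r2 \<in> hs 1" using h1 by blast
  have "r1 < N" using r1 h0 by auto
  then obtain h where "h \<in> H" "r1 \<in> h" using assms(1) unfolding hypergraph_def by blast
  then obtain r0 where r0: "r0 \<in> U" unfolding Heq by auto
  interpret F: flw N l U "hs 0" "hs 1" H r0 r1 r2
  proof
    show "{..<N} = U \<union> hs 0 \<union> hs 1" by (fact part)
    show "U \<inter> hs 0 = {}" using h0(2) by blast
    show "U \<inter> hs 1 = {}" using h1(2) by blast
    show "hs 0 \<inter> hs 1 = {}" by (fact d12)
    show "r0 \<in> U" by (fact r0)
    show "r1 \<in> hs 0" by (fact r1)
    show "r2 \<in> hs 1" by (fact r2)
    show "card U = l" by (fact cU)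
    show "H = {hs 0 \<union> {u} | u. u \<in> U} \<union> {hs 1 \<union> {u} | u. u \<in> U}" by (fact Heq2)
  qed
  have len: "length ls = N" and srt: "sorted ls"
    and cp: "char_poly (norm_laplacian N H) = (\<Prod>i<N. [:- (ls ! i), 1:])"
    using assms(3) unfolding is_sorted_spectrum_def by auto
  have "prod_list (map (\<lambda>y. [:-y, 1:]) ls) = prod_list (map (\<lambda>y. [:-y, 1:]) F.L0)"
    using cp F.char_L unfolding prod_list_nth len by simp
  hence "\<And>x. count (mset ls) x = count (mset F.L0) x"
    unfolding order_prod_lin[symmetric] by simp
  hence ms: "mset ls = mset F.L0" by (simp add: multiset_eqI)
  have lm1: "F.lm \<ge> 1" by (rule F.lm_ge1)
  have lmp: "F.lm < F.lp" by (rule F.lm_lt_lp)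
  have sL0: "sorted F.L0" unfolding F.L0_def using lm1 lmp
    by (auto simp: sorted_append)
  have lsL0: "ls = F.L0"
    using properties_for_sort[OF ms srt] properties_for_sort[OF refl sL0] by simp
  have Nl: "N = l + F.a + F.b" by (rule F.N_eq)
  have pos: "l > 0" "F.a > 0" "F.b > 0" using F.lpos F.apos F.bpos by auto
  define xs where "xs = replicate (N - l - 1) (0::real) @ replicate (l - 1) 1"
  have lxs: "length xs = N - 2" unfolding xs_def using Nl pos by simp
  have L0xs: "F.L0 = xs @ [F.lm, F.lp]" unfolding F.L0_def xs_def by simp
  have i1: "ls ! (N - 1) = F.lp"
  proof -
    have "N - 1 = length xs + 1" using lxs Nl pos by simp
    thus ?thesis unfolding lsL0 L0xs by (simp add: nth_append)
  qed
  have i2: "ls ! (N - 2) = F.lm"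
    unfolding lsL0 L0xs lxs[symmetric] by (simp add: nth_append)
  have c0: "count (mset ls) 0 = N - l - 1"
    unfolding lsL0 F.L0_def using lm1 lmp by auto
  have c1: "count (mset ls) 1 \<ge> l - 1"
    unfolding lsL0 F.L0_def by auto
  have sum: "F.lm + F.lp = real N - real l + 1"
    unfolding F.lm_def F.lp_def using Nl by (simp add: field_simps)
  have eqc: "ls ! (N - 1) = (real N - real l) / 2 + 1 \<and> ls ! (N - 2) = (real N - real l) / 2"
    if ex: "\<exists>c. \<forall>h\<in>H. card h = c"
  proof -
    obtain c where c: "\<forall>h\<in>H. card h = c" using ex by blast
    have "hs 0 \<union> {r0} \<in> H" "hs 1 \<union> {r0} \<in> H" unfolding Heq2 using r0 by auto
    hence "card (hs 0 \<union> {r0}) = card (hs 1 \<union> {r0})" using c by simp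
    moreover have "r0 \<notin> hs 0" "r0 \<notin> hs 1" using r0 h0 h1 by auto
    ultimately have "F.a = F.b" unfolding F.a_def F.b_def using F.finA1 F.finA2 by simp
    hence D1: "F.Dd = 1" unfolding F.Dd_def by simp
    show ?thesis unfolding i1 i2 F.lm_def F.lp_def D1 using Nl \<open>F.a = F.b\<close> by (simp add: field_simps)
  qed
  show ?thesis using c0 c1 i1 i2 lm1 lmp sum eqc by auto
qed

end
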